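(* Let $a_{n,k}$ be the number of shallow $321$-avoiding permutations in $S_n$ with exactly $k$ descents, and let $A(x,z)=\sum_{n\ge 1,k\ge0}a_{n,k}x^kz^n$. Then $$A(x,z)=\frac{z-2z^2+xz^2+z^3-xz^3}{1-3z+3z^2-2xz^2-z^3+xz^3}.$$
   Context: For $\pi\in S_n$: $D(\pi)=\sum_{i}|\pi_i-i|$, $I(\pi)$ is the number of inversions, $T(\pi)=n-\mathrm{cyc}(\pi)$ with $\mathrm{cyc}$ the number of cycles in the disjoint cycle decomposition; $\pi$ is shallow if $I(\pi)+T(\pi)=D(\pi)$. A permutation avoids a pattern $\sigma$ if it has no subsequence order-isomorphic to $\sigma$. A descent of $\pi$ is an index $i\in[n-1]$ with $\pi_i>\pi_{i+1}$. *)

theory Defs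
  imports "HOL-Combinatorics.Permutations" "HOL-Computational_Algebra.Formal_Power_Series"
begin

text \<open>Permutations of [n] = {1..n} are functions \<pi> with \<pi> permutes {1..n}.\<close>

definition disp :: "nat \<Rightarrow> (nat \<Rightarrow> nat) \<Rightarrow> nat" where
  "disp n \<pi> = (\<Sum>i\<in>{1..n}. nat \<bar>int (\<pi> i) - int i\<bar>)"

definition inv_count :: "nat \<Rightarrow> (nat \<Rightarrow> nat) \<Rightarrow> nat" where
  "inv_count n \<pi> = card {(i, j). i \<in> {1..n} \<and> j \<in> {1..n} \<and> i < j \<and> \<pi> i > \<pi> j}"

definition cyc :: "nat \<Rightarrow> (nat \<Rightarrow> nat) \<Rightarrow> nat" where
  "cyc n \<pi> = card ((\<lambda>i. {(\<pi> ^^ k) i | k. True}) ` {1..n})"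

definition refl_len :: "nat \<Rightarrow> (nat \<Rightarrow> nat) \<Rightarrow> nat" where
  "refl_len n \<pi> = n - cyc n \<pi>"

definition shallow :: "nat \<Rightarrow> (nat \<Rightarrow> nat) \<Rightarrow> bool" where
  "shallow n \<pi> \<longleftrightarrow> inv_count n \<pi> + refl_len n \<pi> = disp n \<pi>"

definition avoids321 :: "nat \<Rightarrow> (nat \<Rightarrow> nat) \<Rightarrow> bool" where
  "avoids321 n \<pi> \<longleftrightarrow> \<not> (\<exists>i j k. 1 \<le> i \<and> i < j \<and> j < k \<and> k \<le> n \<and> \<pi> i > \<pi> j \<and> \<pi> j > \<pi> k)"

definition descents :: "nat \<Rightarrow> (nat \<Rightarrow> nat) \<Rightarrow> nat" where
  "descents n \<pi> = card {i. 1 \<le> i \<and> i < n \<and> \<pi> i > \<pi> (Suc i)}"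

definition a_cnt :: "nat \<Rightarrow> nat \<Rightarrow> nat" where
  "a_cnt n k = card {\<pi>. \<pi> permutes {1..n} \<and> shallow n \<pi> \<and> avoids321 n \<pi> \<and> descents n \<pi> = k}"

text \<open>The bivariate generating function, specialised at a real value of x, as a formal
  power series in z. (A permutation in S_n has at most n-1 descents.)\<close>
definition A_gf :: "real \<Rightarrow> real fps" where
  "A_gf x = Abs_fps (\<lambda>n. if n = 0 then 0 else (\<Sum>k<n. real (a_cnt n k) * x ^ k))"

end

theory Submission
  imports Defs "HOL-Combinatorics.Cycles"
begin


definition orb :: "(nat \<Rightarrow> nat) \<Rightarrow> nat \<Rightarrow> nat set" where
  "orb p i = {(p ^^ k) i | k. True}"

lemma orb_self: "i \<in> orb p i"
  unfolding orb_def by (auto intro: exI[of _ 0])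

lemma orb_closed: assumes "y \<in> orb p j" shows "p y \<in> orb p j"
proof -
  obtain k where "y = (p ^^ k) j" using assms unfolding orb_def by auto
  hence "p y = (p ^^ Suc k) j" by simp
  thus ?thesis unfolding orb_def by blast
qed

lemma orb_min: assumes "j \<in> A" "\<And>y. y \<in> A \<Longrightarrow> p y \<in> A" shows "orb p j \<subseteq> A"
proof
  fix y assume "y \<in> orb p j"
  then obtain k where "y = (p ^^ k) j" unfolding orb_def by auto
  moreover have "(p ^^ k) j \<in> A" by (induction k) (use assms in auto)
  ultimately show "y \<in> A" by simp
qed

lemma orb_sym:
  assumes "permutation p" "i \<in> orb p j" shows "orb p i = orb p j"
proof -
  obtain m where m: "i = (p ^^ m) j" using assms(2) unfolding orb_def by auto
  obtain N where N: "p ^^ N = id" "N > m" using permutation_is_nilpotent'[OF assms(1)] by blast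
  have ji: "j = (p ^^ (N - m)) i"
  proof -
    have "(p ^^ (N - m)) i = (p ^^ (N - m + m)) j" by (simp add: m funpow_add)
    also have "N - m + m = N" using N by simp
    finally show ?thesis using N by simp
  qed
  show ?thesis
  proof
    show "orb p i \<subseteq> orb p j"
    proof
      fix y assume "y \<in> orb p i"
      then obtain k where "y = (p ^^ k) i" unfolding orb_def by auto
      hence "y = (p ^^ (k + m)) j" by (simp add: m funpow_add)
      thus "y \<in> orb p j" unfolding orb_def by auto
    qed
    show "orb p j \<subseteq> orb p i"
    proof
      fix y assume "y \<in> orb p j"
      then obtain k where "y = (p ^^ k) j" unfolding orb_def by auto
      hence "y = (p ^^ (k + (N - m))) i" by (simp add: ji funpow_add)
      thus "y \<in> orb p i" unfolding orb_def by auto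
    qed
  qed
qed

lemma orb_permutes_sub:
  assumes "p permutes S" "i \<in> S" shows "orb p i \<subseteq> S"
  by (rule orb_min) (use assms in \<open>auto simp: permutes_in_image\<close>)

lemma orb_out:
  assumes "p permutes S" "i \<notin> S" shows "orb p i = {i}"
proof -
  have "p i = i" using assms permutes_not_in by metis
  hence "orb p i \<subseteq> {i}" using orb_min[of i "{i}" p] by auto
  thus ?thesis using orb_self[of i p] by auto
qed

lemma cyc_alt: "cyc n p = card (orb p ` {1..n})"
  unfolding cyc_def orb_def by simp

lemma cyc_fix:
  assumes "\<sigma> permutes {1..m}"
  shows "cyc (Suc m) \<sigma> = Suc (cyc m \<sigma>)"
proof -
  have "orb \<sigma> ` {1..Suc m} = insert (orb \<sigma> (Suc m)) (orb \<sigma> ` {1..m})"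
    by (auto simp: atLeastAtMostSuc_conv)
  moreover have "orb \<sigma> (Suc m) = {Suc m}" using orb_out[OF assms] by simp
  moreover have "{Suc m} \<notin> orb \<sigma> ` {1..m}"
    using orb_permutes_sub[OF assms] by fastforce
  ultimately show ?thesis unfolding cyc_alt by simp
qed

lemma cyc_ins:
  assumes s: "\<sigma> permutes {1..m}" and j: "j \<in> {1..m}"
  shows "cyc (Suc m) (\<sigma> \<circ> transpose j (Suc m)) = cyc m \<sigma>"
proof -
  define n where "n = Suc m"
  define \<pi> where "\<pi> = \<sigma> \<circ> transpose j n"
  define C where "C = orb \<sigma> j"
  have jn: "j \<noteq> n" using j n_def by auto
  have \<sigma>n: "\<sigma> n = n" using permutes_not_in[OF s, of n] n_def by auto
  have \<pi>j: "\<pi> j = n" and \<pi>n: "\<pi> n = \<sigma> j" using jn \<sigma>n by (auto simp: \<pi>_def)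
  have \<pi>o: "\<pi> y = \<sigma> y" if "y \<noteq> j" "y \<noteq> n" for y using that by (auto simp: \<pi>_def)
  have ps: "permutation \<sigma>" using s permutation_permutes by blast
  have pp: "permutation \<pi>" unfolding \<pi>_def
    by (simp add: ps permutation_compose permutation_swap_id)
  have Csub: "C \<subseteq> {1..m}" unfolding C_def using orb_permutes_sub[OF s j] .
  have nC: "n \<notin> C" using Csub n_def by auto
  have orbj: "orb \<pi> j = insert n C"
  proof
    show "orb \<pi> j \<subseteq> insert n C"
    proof (rule orb_min)
      show "j \<in> insert n C" using orb_self C_def by auto
      fix y assume y: "y \<in> insert n C"
      show "\<pi> y \<in> insert n C"
      proof (cases "y = j")
        case True thus ?thesis using \<pi>j by simp
      next
        case False
        show ?thesis
        proof (cases "y = n")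
          case True thus ?thesis using \<pi>n orb_closed[of j \<sigma> j] orb_self C_def by auto
        next
          case False
          with \<open>y \<noteq> j\<close> y show ?thesis using \<pi>o orb_closed C_def by auto
        qed
      qed
    qed
    have nin: "n \<in> orb \<pi> j" using orb_closed[OF orb_self[of j \<pi>]] \<pi>j by simp
    have "C \<subseteq> orb \<pi> j" unfolding C_def
    proof (rule orb_min)
      show "j \<in> orb \<pi> j" by (rule orb_self)
      fix y assume y: "y \<in> orb \<pi> j"
      show "\<sigma> y \<in> orb \<pi> j"
      proof (cases "y = j")
        case True thus ?thesis using \<pi>n orb_closed[OF nin] by simp
      next
        case False
        show ?thesis
        proof (cases "y = n")
          case True thus ?thesis using \<sigma>n nin by simp
        next
          case False with \<open>y \<noteq> j\<close> y show ?thesis using \<pi>o orb_closed by metis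
        qed
      qed
    qed
    thus "insert n C \<subseteq> orb \<pi> j" using nin by simp
  qed
  have orbC: "orb \<pi> i = insert n C" if "i \<in> insert n C" for i
    using orb_sym[OF pp, of i j] that orbj by simp
  have orbO: "orb \<pi> i = orb \<sigma> i" if i: "i \<in> {1..m} - C" for i
  proof -
    have disj: "orb \<sigma> i \<inter> C = {}"
    proof (rule ccontr)
      assume "orb \<sigma> i \<inter> C \<noteq> {}"
      then obtain x where x: "x \<in> orb \<sigma> i" "x \<in> C" by auto
      have "orb \<sigma> x = orb \<sigma> i" using orb_sym[OF ps] x(1) by blast
      moreover have "orb \<sigma> x = C" using orb_sym[OF ps] x(2) C_def by blast
      ultimately have "i \<in> C" using orb_self[of i \<sigma>] by simp
      thus False using i by blast
    qed
    have sub: "orb \<sigma> i \<subseteq> {1..m}" using orb_permutes_sub[OF s] i by auto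
    have "(\<pi> ^^ k) i = (\<sigma> ^^ k) i" for k
    proof (induction k)
      case 0 show ?case by simp
    next
      case (Suc k)
      have mem: "(\<sigma> ^^ k) i \<in> orb \<sigma> i" unfolding orb_def by auto
      have "(\<sigma> ^^ k) i \<noteq> j" using mem disj orb_self[of j \<sigma>] C_def by auto
      moreover have "(\<sigma> ^^ k) i \<noteq> n" using mem sub n_def by auto
      ultimately show ?case using Suc \<pi>o by simp
    qed
    thus ?thesis unfolding orb_def by simp
  qed
  have U: "{1..n} = insert n C \<union> ({1..m} - C)" using Csub n_def by auto
  have img\<pi>: "orb \<pi> ` {1..n} = insert (insert n C) (orb \<sigma> ` ({1..m} - C))"
  proof -
    have "orb \<pi> ` {1..n} = orb \<pi> ` (insert n C) \<union> orb \<pi> ` ({1..m} - C)" by (subst U, rule image_Un)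
    also have "orb \<pi> ` (insert n C) = {insert n C}" using orbC by auto
    also have "orb \<pi> ` ({1..m} - C) = orb \<sigma> ` ({1..m} - C)" using orbO by auto
    finally show ?thesis by simp
  qed
  have img\<sigma>: "orb \<sigma> ` {1..m} = insert C (orb \<sigma> ` ({1..m} - C))"
  proof -
    have U2: "{1..m} = C \<union> ({1..m} - C)" using Csub by auto
    have "orb \<sigma> ` {1..m} = orb \<sigma> ` C \<union> orb \<sigma> ` ({1..m} - C)" by (subst U2, rule image_Un)
    moreover have "orb \<sigma> ` C = {C}"
    proof -
      have "\<forall>i\<in>C. orb \<sigma> i = C" using orb_sym[OF ps] C_def by blast
      moreover have "j \<in> C" using orb_self C_def by metis
      ultimately show ?thesis by blast
    qed
    ultimately show ?thesis by simp
  qed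
  have nx1: "insert n C \<notin> orb \<sigma> ` ({1..m} - C)" using orb_permutes_sub[OF s] n_def by fastforce
  have nx2: "C \<notin> orb \<sigma> ` ({1..m} - C)" using orb_self by fastforce
  show ?thesis unfolding cyc_alt n_def[symmetric] \<pi>_def[symmetric]
    using img\<pi> img\<sigma> nx1 nx2 by simp
qed



lemma ins_apply:
  assumes s: "\<sigma> permutes {1..m}" and j: "j \<in> {1..m}"
  shows "(\<sigma> \<circ> transpose j (Suc m)) j = Suc m"
    "(\<sigma> \<circ> transpose j (Suc m)) (Suc m) = \<sigma> j"
    "k \<noteq> j \<Longrightarrow> k \<noteq> Suc m \<Longrightarrow> (\<sigma> \<circ> transpose j (Suc m)) k = \<sigma> k"
proof -
  have "\<sigma> (Suc m) = Suc m" using permutes_not_in[OF s, of "Suc m"] by auto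
  thus "(\<sigma> \<circ> transpose j (Suc m)) j = Suc m" by simp
  show "(\<sigma> \<circ> transpose j (Suc m)) (Suc m) = \<sigma> j" by simp
  show "k \<noteq> j \<Longrightarrow> k \<noteq> Suc m \<Longrightarrow> (\<sigma> \<circ> transpose j (Suc m)) k = \<sigma> k" by simp
qed

lemma ins_permutes:
  assumes s: "\<sigma> permutes {1..m}" and j: "j \<in> {1..m}"
  shows "(\<sigma> \<circ> transpose j (Suc m)) permutes {1..Suc m}"
proof -
  have "\<sigma> permutes {1..Suc m}" using permutes_subset[OF s] by auto
  moreover have "transpose j (Suc m) permutes {1..Suc m}" using j by (intro permutes_swap_id) auto
  ultimately show ?thesis by (metis permutes_compose)
qed

lemma perm_range: "p permutes {1..m} \<Longrightarrow> k \<in> {1..m} \<Longrightarrow> p k \<in> {1..m}"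
  by (metis permutes_in_image)

lemma perm_inj: "p permutes S \<Longrightarrow> p x = p y \<Longrightarrow> x = y"
  using permutes_inj by (metis injD)

lemma disp_fix:
  assumes s: "\<sigma> permutes {1..m}"
  shows "disp (Suc m) \<sigma> = disp m \<sigma>"
proof -
  have "\<sigma> (Suc m) = Suc m" using permutes_not_in[OF s, of "Suc m"] by auto
  thus ?thesis unfolding disp_def by simp
qed

lemma disp_ins:
  assumes s: "\<sigma> permutes {1..m}" and j: "j \<in> {1..m}"
  shows "disp (Suc m) (\<sigma> \<circ> transpose j (Suc m)) + nat \<bar>int (\<sigma> j) - int j\<bar>
       = disp m \<sigma> + (Suc m - j) + (Suc m - \<sigma> j)"
proof -
  define \<pi> where "\<pi> = \<sigma> \<circ> transpose j (Suc m)"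
  note ap = ins_apply[OF s j, folded \<pi>_def]
  define f where "f p k = nat \<bar>int (p k) - int k\<bar>" for p and k :: nat
  have ij: "\<sigma> j \<in> {1..m}" using perm_range[OF s j] .
  have fin: "finite ({1..m} - {j})" by simp
  have "disp (Suc m) \<pi> = f \<pi> (Suc m) + sum (f \<pi>) {1..m}"
    unfolding disp_def f_def by simp
  also have "sum (f \<pi>) {1..m} = f \<pi> j + sum (f \<pi>) ({1..m} - {j})"
    using j by (simp add: sum.remove)
  also have "sum (f \<pi>) ({1..m} - {j}) = sum (f \<sigma>) ({1..m} - {j})"
    by (rule sum.cong) (auto simp: f_def ap)
  finally have A: "disp (Suc m) \<pi> = f \<pi> (Suc m) + (f \<pi> j + sum (f \<sigma>) ({1..m} - {j}))" .
  have B: "disp m \<sigma> = f \<sigma> j + sum (f \<sigma>) ({1..m} - {j})"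
    unfolding disp_def f_def[symmetric] using j by (simp add: sum.remove)
  have "f \<pi> (Suc m) = Suc m - \<sigma> j" "f \<pi> j = Suc m - j"
    using ap ij j by (auto simp: f_def)
  thus ?thesis using A B unfolding \<pi>_def[symmetric] f_def by simp
qed

definition Inv :: "nat \<Rightarrow> (nat \<Rightarrow> nat) \<Rightarrow> (nat \<times> nat) set" where
  "Inv n p = {(i, j). i \<in> {1..n} \<and> j \<in> {1..n} \<and> i < j \<and> p i > p j}"

lemma inv_count_Inv: "inv_count n p = card (Inv n p)"
  unfolding inv_count_def Inv_def by simp

lemma finite_Inv: "finite (Inv n p)"
  by (rule finite_subset[of _ "{1..n} \<times> {1..n}"]) (auto simp: Inv_def)

lemma inv_fix:
  assumes s: "\<sigma> permutes {1..m}"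
  shows "inv_count (Suc m) \<sigma> = inv_count m \<sigma>"
proof -
  have sn: "\<sigma> (Suc m) = Suc m" using permutes_not_in[OF s, of "Suc m"] by auto
  have le: "\<sigma> k \<le> m" if "k \<in> {1..m}" for k using perm_range[OF s that] by simp
  have "Inv (Suc m) \<sigma> \<subseteq> Inv m \<sigma>"
  proof
    fix x assume x: "x \<in> Inv (Suc m) \<sigma>"
    then obtain p q where pq: "x = (p, q)" "p \<in> {1..Suc m}" "q \<in> {1..Suc m}" "p < q" "\<sigma> p > \<sigma> q"
      unfolding Inv_def by auto
    have "q \<noteq> Suc m"
    proof
      assume "q = Suc m"
      hence "p \<in> {1..m}" using pq by auto
      hence "\<sigma> p \<le> m" by (rule le)
      thus False using pq \<open>q = Suc m\<close> sn by simp
    qed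
    hence "q \<le> m" using pq by simp
    thus "x \<in> Inv m \<sigma>" using pq unfolding Inv_def by auto
  qed
  moreover have "Inv m \<sigma> \<subseteq> Inv (Suc m) \<sigma>" unfolding Inv_def by auto
  ultimately have "Inv (Suc m) \<sigma> = Inv m \<sigma>" by blast
  thus ?thesis by (simp add: inv_count_Inv)
qed

lemma inv_ins:
  assumes s: "\<sigma> permutes {1..m}" and j: "j \<in> {1..m}"
  shows "inv_count (Suc m) (\<sigma> \<circ> transpose j (Suc m)) + card {k. j < k \<and> k \<le> m \<and> \<sigma> k < \<sigma> j}
       = inv_count m \<sigma> + (Suc m - j) + card {k. j < k \<and> k \<le> m \<and> \<sigma> k > \<sigma> j}"
proof -
  define n where "n = Suc m"
  define \<pi> where "\<pi> = \<sigma> \<circ> transpose j n"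
  define i where "i = \<sigma> j"
  have \<pi>j: "\<pi> j = n" and \<pi>n: "\<pi> n = i" and \<pi>o: "\<And>k. k \<noteq> j \<Longrightarrow> k \<noteq> n \<Longrightarrow> \<pi> k = \<sigma> k"
    using ins_apply[OF s j] by (auto simp: \<pi>_def n_def i_def)
  have rng: "\<And>k. k \<in> {1..m} \<Longrightarrow> \<sigma> k \<in> {1..m}" using perm_range[OF s] by blast
  have inj: "\<And>x y. \<sigma> x = \<sigma> y \<Longrightarrow> x = y" using perm_inj[OF s] by blast
  have jm: "1 \<le> j" "j \<le> m" using j by auto
  define Aset where "Aset = {k. j < k \<and> k \<le> m \<and> \<sigma> k > i}"
  define Bset where "Bset = {k. j < k \<and> k \<le> m \<and> \<sigma> k < i}"
  define B' where "B' = (\<lambda>q. (j, q)) ` Bset"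
  define X where "X = Inv m \<sigma> - B'"
  define J where "J = (\<lambda>q. (j, q)) ` {j<..n}"
  define A' where "A' = (\<lambda>p. (p, n)) ` Aset"
  define Y where "Y = {(p, q) \<in> Inv n \<pi>. p \<noteq> j \<and> \<not> (q = n \<and> p > j)}"
  have B'sub: "B' \<subseteq> Inv m \<sigma>" unfolding B'_def Bset_def Inv_def i_def using jm by auto
  have cardB': "card B' = card Bset" unfolding B'_def by (rule card_image) (auto simp: inj_on_def)
  have finB: "finite Bset" unfolding Bset_def by (rule finite_subset[of _ "{..m}"]) auto
  have finA: "finite Aset" unfolding Aset_def by (rule finite_subset[of _ "{..m}"]) auto
  have IS: "card (Inv m \<sigma>) = card X + card Bset"
    using B'sub cardB' finite_Inv[of m \<sigma>] unfolding X_def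
    by (metis card_Diff_subset card_mono finite_subset le_add_diff_inverse2)
  have cardJ: "card J = n - j" unfolding J_def by (subst card_image) (auto simp: inj_on_def)
  have cardA': "card A' = card Aset" unfolding A'_def by (rule card_image) (auto simp: inj_on_def)
  have IP: "Inv n \<pi> = Y \<union> J \<union> A'"
  proof
    show "Inv n \<pi> \<subseteq> Y \<union> J \<union> A'"
    proof
      fix x assume x: "x \<in> Inv n \<pi>"
      obtain p q where pq: "x = (p, q)" by fastforce
      show "x \<in> Y \<union> J \<union> A'"
      proof (cases "p = j")
        case True thus ?thesis using x pq unfolding J_def Inv_def by auto
      next
        case False
        show ?thesis
        proof (cases "q = n \<and> p > j")
          case True
          hence "p \<in> Aset" using x pq \<pi>o[of p] \<pi>n False unfolding Aset_def Inv_def n_def by auto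
          thus ?thesis using True pq unfolding A'_def by auto
        next
          case False2: False
          thus ?thesis using x pq False unfolding Y_def by auto
        qed
      qed
    qed
    have "J \<subseteq> Inv n \<pi>"
    proof
      fix x assume "x \<in> J"
      then obtain q where q: "x = (j, q)" "j < q" "q \<le> n" unfolding J_def by auto
      have "\<pi> q < n"
      proof (cases "q = n")
        case True thus ?thesis using \<pi>n rng[of j] j i_def n_def by auto
      next
        case False thus ?thesis using \<pi>o[of q] q rng[of q] jm n_def by auto
      qed
      thus "x \<in> Inv n \<pi>" using q \<pi>j jm unfolding Inv_def by auto
    qed
    moreover have "A' \<subseteq> Inv n \<pi>"
      using \<pi>o \<pi>n jm unfolding A'_def Aset_def Inv_def n_def by auto
    ultimately show "Y \<union> J \<union> A' \<subseteq> Inv n \<pi>" unfolding Y_def by auto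
  qed
  have disj1: "(Y \<union> J) \<inter> A' = {}" unfolding Y_def J_def A'_def Aset_def by auto
  have disj2: "Y \<inter> J = {}" unfolding Y_def J_def by auto
  have finY: "finite Y" unfolding Y_def using finite_Inv[of n \<pi>]
    by (rule rev_finite_subset) auto
  have cardIP: "card (Inv n \<pi>) = card Y + (n - j) + card Aset"
    using IP disj1 disj2 finY cardJ cardA'
    by (simp add: card_Un_disjoint J_def A'_def finA)
  define g where "g = (\<lambda>(p::nat, q::nat). if q = j then (p, n) else (p, q))"
  have injg: "inj_on g X"
    unfolding inj_on_def g_def X_def Inv_def n_def by (auto split: if_splits)
  have gX: "g ` X = Y"
  proof
    show "g ` X \<subseteq> Y"
    proof
      fix y assume "y \<in> g ` X"
      then obtain p q where pq: "(p, q) \<in> X" "y = g (p, q)" by auto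
      have pq2: "p \<in> {1..m}" "q \<in> {1..m}" "p < q" "\<sigma> p > \<sigma> q" "(p, q) \<notin> B'"
        using pq unfolding X_def Inv_def by auto
      have pj: "p \<noteq> j"
      proof
        assume "p = j"
        hence "q \<in> Bset" using pq2 unfolding Bset_def i_def by auto
        thus False using pq2 \<open>p = j\<close> unfolding B'_def by auto
      qed
      show "y \<in> Y"
      proof (cases "q = j")
        case True
        have "y = (p, n)" using pq True g_def by simp
        moreover have "\<pi> p = \<sigma> p" using \<pi>o[of p] pj pq2 n_def by auto
        ultimately show ?thesis using pq2 True \<pi>n i_def pj unfolding Y_def Inv_def n_def by auto
      next
        case False
        have "y = (p, q)" using pq False g_def by simp
        moreover have "\<pi> p = \<sigma> p" "\<pi> q = \<sigma> q" using \<pi>o pj False pq2 n_def by auto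
        ultimately show ?thesis using pq2 pj unfolding Y_def Inv_def n_def by auto
      qed
    qed
    show "Y \<subseteq> g ` X"
    proof
      fix y assume y: "y \<in> Y"
      then obtain p q where pq: "y = (p, q)" "p \<in> {1..n}" "q \<in> {1..n}" "p < q" "\<pi> p > \<pi> q"
        "p \<noteq> j" "\<not> (q = n \<and> p > j)" unfolding Y_def Inv_def by auto
      have pn: "p \<noteq> n" using pq by auto
      have \<pi>p: "\<pi> p = \<sigma> p" using \<pi>o pq pn by auto
      have qj: "q \<noteq> j"
      proof
        assume "q = j"
        hence "\<pi> q = n" using \<pi>j by simp
        moreover have "\<sigma> p \<le> m" using rng[of p] pq pn n_def by auto
        ultimately show False using pq \<pi>p n_def by auto
      qed
      show "y \<in> g ` X"
      proof (cases "q = n")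
        case True
        hence "p < j" using pq by auto
        hence "(p, j) \<in> X" using pq True \<pi>n \<pi>p i_def jm unfolding X_def Inv_def B'_def by auto
        moreover have "g (p, j) = y" using True pq g_def by simp
        ultimately show ?thesis by force
      next
        case False
        hence "(p, q) \<in> X" using pq \<pi>o[of q] qj \<pi>p n_def unfolding X_def Inv_def B'_def by auto
        moreover have "g (p, q) = y" using qj pq g_def by simp
        ultimately show ?thesis by force
      qed
    qed
  qed
  have "card Y = card X" using card_image[OF injg] gX by simp
  thus ?thesis using IS cardIP unfolding inv_count_Inv \<pi>_def n_def Aset_def Bset_def i_def
    by simp
qed

lemma ab_sum:
  assumes s: "\<sigma> permutes {1..m}" and j: "j \<in> {1..m}"
  shows "card {k. j < k \<and> k \<le> m \<and> \<sigma> k < \<sigma> j} + card {k. j < k \<and> k \<le> m \<and> \<sigma> k > \<sigma> j} = m - j"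
proof -
  define L where "L = {k. j < k \<and> k \<le> m \<and> \<sigma> k < \<sigma> j}"
  define G where "G = {k. j < k \<and> k \<le> m \<and> \<sigma> k > \<sigma> j}"
  have inj: "\<And>x y. \<sigma> x = \<sigma> y \<Longrightarrow> x = y" using perm_inj[OF s] by blast
  have sub: "{j<..m} \<subseteq> L \<union> G"
  proof
    fix x assume x: "x \<in> {j<..m}"
    have "x \<noteq> j" using x by auto
    hence "\<sigma> x \<noteq> \<sigma> j" using inj by blast
    thus "x \<in> L \<union> G" using x unfolding L_def G_def by (cases "\<sigma> x < \<sigma> j") auto
  qed
  have "L \<union> G \<subseteq> {j<..m}" unfolding L_def G_def by auto
  hence U: "{j<..m} = L \<union> G" using sub by blast
  have fL: "finite L" unfolding L_def by (rule finite_subset[of _ "{..m}"]) auto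
  have fG: "finite G" unfolding G_def by (rule finite_subset[of _ "{..m}"]) auto
  have "L \<inter> G = {}" unfolding L_def G_def by auto
  hence "card (L \<union> G) = card L + card G" using fL fG by (simp add: card_Un_disjoint)
  hence "card L + card G = card {j<..m}" using U by simp
  thus ?thesis unfolding L_def G_def by simp
qed

lemma a_bound:
  assumes s: "\<sigma> permutes {1..m}" and j: "j \<in> {1..m}"
  shows "card {k. j < k \<and> k \<le> m \<and> \<sigma> k > \<sigma> j} \<le> m - \<sigma> j"
proof -
  let ?A = "{k. j < k \<and> k \<le> m \<and> \<sigma> k > \<sigma> j}"
  have inj: "inj_on \<sigma> ?A" using permutes_inj[OF s] by (metis inj_on_subset subset_UNIV)
  have sub: "\<sigma> ` ?A \<subseteq> {\<sigma> j<..m}"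
  proof
    fix y assume "y \<in> \<sigma> ` ?A"
    then obtain k where k: "y = \<sigma> k" "j < k" "k \<le> m" "\<sigma> k > \<sigma> j" by auto
    have "k \<in> {1..m}" using k j by auto
    hence "\<sigma> k \<le> m" using perm_range[OF s] by auto
    thus "y \<in> {\<sigma> j<..m}" using k by auto
  qed
  have "card ?A \<le> card {\<sigma> j<..m}" using card_inj_on_le[OF inj sub] by simp
  thus ?thesis by simp
qed

lemma cyc_le: "cyc n p \<le> n"
proof -
  have "card (orb p ` {1..n}) \<le> card {1..n}" by (rule card_image_le) simp
  thus ?thesis unfolding cyc_alt by simp
qed

lemma decomp:
  assumes p: "\<pi> permutes {1..Suc m}" and nf: "\<pi> (Suc m) \<noteq> Suc m"
  obtains j \<sigma> where "j \<in> {1..m}" "\<sigma> permutes {1..m}" "\<pi> = \<sigma> \<circ> transpose j (Suc m)"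
proof -
  obtain j where jj0: "\<pi> j = Suc m" using surjD[OF permutes_surj[OF p], of "Suc m"] by (elim exE) (rule that, simp)
  have "j \<in> {1..Suc m}"
  proof (rule ccontr)
    assume "j \<notin> {1..Suc m}"
    hence "\<pi> j = j" using permutes_not_in[OF p] by blast
    thus False using jj0 \<open>j \<notin> {1..Suc m}\<close> by auto
  qed
  note jj = this jj0
  have jn: "j \<noteq> Suc m" using jj nf by auto
  hence jm: "j \<in> {1..m}" using jj by auto
  define \<sigma> where "\<sigma> = \<pi> \<circ> transpose j (Suc m)"
  have tp: "transpose j (Suc m) permutes {1..Suc m}" using jj by (intro permutes_swap_id) auto
  have sp: "\<sigma> permutes {1..Suc m}" unfolding \<sigma>_def
    using permutes_compose[OF tp p] .
  have "\<sigma> (Suc m) = Suc m" using jj by (simp add: \<sigma>_def)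
  hence "\<And>x. x \<in> {1..Suc m} - {1..m} \<Longrightarrow> \<sigma> x = x" by (auto simp: le_Suc_eq)
  hence "\<sigma> permutes {1..m}" using permutes_superset[OF sp] by blast
  moreover have "\<pi> = \<sigma> \<circ> transpose j (Suc m)" unfolding \<sigma>_def by (rule ext) simp
  ultimately show ?thesis using that jm by blast
qed



theorem DG_lower:
  "\<pi> permutes {1..n} \<Longrightarrow> inv_count n \<pi> + refl_len n \<pi> \<le> disp n \<pi>"
proof (induction n arbitrary: \<pi>)
  case 0
  hence "\<pi> = id" by simp
  thus ?case by (simp add: inv_count_def refl_len_def disp_def)
next
  case (Suc m)
  show ?case
  proof (cases "\<pi> (Suc m) = Suc m")
    case True
    hence "\<And>x. x \<in> {1..Suc m} - {1..m} \<Longrightarrow> \<pi> x = x" by (auto simp: le_Suc_eq)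
    hence s: "\<pi> permutes {1..m}" using permutes_superset[OF Suc.prems] by blast
    have "refl_len (Suc m) \<pi> = refl_len m \<pi>" unfolding refl_len_def using cyc_fix[OF s] by simp
    thus ?thesis using Suc.IH[OF s] disp_fix[OF s] inv_fix[OF s] by simp
  next
    case False
    then obtain j \<sigma> where j: "j \<in> {1..m}" and s: "\<sigma> permutes {1..m}" and pe: "\<pi> = \<sigma> \<circ> transpose j (Suc m)"
      using decomp[OF Suc.prems] by blast
    have ih: "inv_count m \<sigma> + refl_len m \<sigma> \<le> disp m \<sigma>" using Suc.IH[OF s] .
    have d: "disp (Suc m) \<pi> + nat \<bar>int (\<sigma> j) - int j\<bar> = disp m \<sigma> + (Suc m - j) + (Suc m - \<sigma> j)"
      using disp_ins[OF s j] pe by simp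
    have iv: "inv_count (Suc m) \<pi> + card {k. j < k \<and> k \<le> m \<and> \<sigma> k < \<sigma> j}
       = inv_count m \<sigma> + (Suc m - j) + card {k. j < k \<and> k \<le> m \<and> \<sigma> k > \<sigma> j}"
      using inv_ins[OF s j] pe by simp
    have c: "cyc (Suc m) \<pi> = cyc m \<sigma>" using cyc_ins[OF s j] pe by simp
    have ab: "card {k. j < k \<and> k \<le> m \<and> \<sigma> k < \<sigma> j} + card {k. j < k \<and> k \<le> m \<and> \<sigma> k > \<sigma> j} = m - j"
      using ab_sum[OF s j] .
    have a: "card {k. j < k \<and> k \<le> m \<and> \<sigma> k > \<sigma> j} \<le> m - \<sigma> j" using a_bound[OF s j] .
    have cl: "cyc m \<sigma> \<le> m" using cyc_le .
    have r: "\<sigma> j \<in> {1..m}" using perm_range[OF s j] .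
    define A where "A = card {k. j < k \<and> k \<le> m \<and> \<sigma> k > \<sigma> j}"
    define B where "B = card {k. j < k \<and> k \<le> m \<and> \<sigma> k < \<sigma> j}"
    define E where "E = nat \<bar>int (\<sigma> j) - int j\<bar>"
    have E1: "int E \<ge> int (\<sigma> j) - int j" "int E \<ge> int j - int (\<sigma> j)" unfolding E_def by auto
    have rl: "int (refl_len (Suc m) \<pi>) = int m + 1 - int (cyc m \<sigma>)"
             "int (refl_len m \<sigma>) = int m - int (cyc m \<sigma>)"
      unfolding refl_len_def c using cl by auto
    have e1: "int (Suc m - j) = int m + 1 - int j" using j by auto
    have e2: "int (Suc m - \<sigma> j) = int m + 1 - int (\<sigma> j)" using r by auto
    have e3: "int (m - j) = int m - int j" using j by auto
    have e4: "int (m - \<sigma> j) = int m - int (\<sigma> j)" using r by auto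
    have "int (disp (Suc m) \<pi> + E) = int (disp m \<sigma> + (Suc m - j) + (Suc m - \<sigma> j))"
      using d unfolding E_def by (rule arg_cong)
    hence d': "int (disp (Suc m) \<pi>) + int E = int (disp m \<sigma>) + (int m + 1 - int j) + (int m + 1 - int (\<sigma> j))"
      by (simp only: of_nat_add e1 e2)
    have "int (inv_count (Suc m) \<pi> + B) = int (inv_count m \<sigma> + (Suc m - j) + A)"
      using iv unfolding A_def B_def by (rule arg_cong)
    hence iv': "int (inv_count (Suc m) \<pi>) + int B = int (inv_count m \<sigma>) + (int m + 1 - int j) + int A"
      by (simp only: of_nat_add e1)
    have "int (B + A) = int (m - j)" using ab unfolding A_def B_def by (rule arg_cong)
    hence ab': "int B + int A = int m - int j" by (simp only: of_nat_add e3)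
    have "int A \<le> int (m - \<sigma> j)" using a unfolding A_def by (rule of_nat_mono)
    hence a': "int A \<le> int m - int (\<sigma> j)" by (simp only: e4)
    have ih': "int (inv_count m \<sigma>) + int (refl_len m \<sigma>) \<le> int (disp m \<sigma>)" using ih by linarith
    have "int (inv_count (Suc m) \<pi>) + int (refl_len (Suc m) \<pi>) \<le> int (disp (Suc m) \<pi>)"
    proof (cases "\<sigma> j \<le> j")
      case True
      hence "int E = int j - int (\<sigma> j)" unfolding E_def by auto
      thus ?thesis using d' iv' ab' a' ih' rl by linarith
    next
      case False
      hence "int E = int (\<sigma> j) - int j" unfolding E_def by auto
      thus ?thesis using d' iv' ab' a' ih' rl by linarith
    qed
    thus ?thesis by linarith
  qed
qed


definition SS :: "nat \<Rightarrow> (nat \<Rightarrow> nat) set" where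
  "SS n = {\<pi>. \<pi> permutes {1..n} \<and> shallow n \<pi> \<and> avoids321 n \<pi>}"

lemma refl_fix:
  assumes s: "\<sigma> permutes {1..m}"
  shows "refl_len (Suc m) \<sigma> = refl_len m \<sigma>"
  unfolding refl_len_def using cyc_fix[OF s] by simp

lemma avoids_fix:
  assumes s: "\<sigma> permutes {1..m}"
  shows "avoids321 (Suc m) \<sigma> \<longleftrightarrow> avoids321 m \<sigma>"
proof -
  have sn: "\<sigma> (Suc m) = Suc m" using permutes_not_in[OF s, of "Suc m"] by auto
  have le: "\<sigma> k \<le> m" if "k \<in> {1..m}" for k using perm_range[OF s that] by simp
  show ?thesis unfolding avoids321_def
  proof
    assume L: "\<not> (\<exists>i j k. 1 \<le> i \<and> i < j \<and> j < k \<and> k \<le> Suc m \<and> \<sigma> j < \<sigma> i \<and> \<sigma> k < \<sigma> j)"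
    show "\<not> (\<exists>i j k. 1 \<le> i \<and> i < j \<and> j < k \<and> k \<le> m \<and> \<sigma> j < \<sigma> i \<and> \<sigma> k < \<sigma> j)"
      using L by (meson le_SucI)
  next
    assume R: "\<not> (\<exists>i j k. 1 \<le> i \<and> i < j \<and> j < k \<and> k \<le> m \<and> \<sigma> j < \<sigma> i \<and> \<sigma> k < \<sigma> j)"
    show "\<not> (\<exists>i j k. 1 \<le> i \<and> i < j \<and> j < k \<and> k \<le> Suc m \<and> \<sigma> j < \<sigma> i \<and> \<sigma> k < \<sigma> j)"
    proof
      assume "\<exists>i j k. 1 \<le> i \<and> i < j \<and> j < k \<and> k \<le> Suc m \<and> \<sigma> j < \<sigma> i \<and> \<sigma> k < \<sigma> j"
      then obtain i j k where ijk: "1 \<le> i" "i < j" "j < k" "k \<le> Suc m" "\<sigma> j < \<sigma> i" "\<sigma> k < \<sigma> j" by blast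
      show False
      proof (cases "k = Suc m")
        case True
        have "\<sigma> j \<le> m" using le[of j] ijk True by auto
        thus False using True sn ijk by simp
      next
        case False thus False using R ijk by (meson le_Suc_eq)
      qed
    qed
  qed
qed

lemma SS_fix:
  assumes s: "\<sigma> permutes {1..m}"
  shows "\<sigma> \<in> SS (Suc m) \<longleftrightarrow> \<sigma> \<in> SS m"
proof -
  have "\<sigma> permutes {1..Suc m}" using permutes_subset[OF s] by auto
  thus ?thesis unfolding SS_def shallow_def
    using s avoids_fix[OF s] refl_fix[OF s] disp_fix[OF s] inv_fix[OF s] by auto
qed

lemma delta_ins:
  assumes s: "\<sigma> permutes {1..m}" and j: "j \<in> {1..m}"
  defines "\<pi> \<equiv> \<sigma> \<circ> transpose j (Suc m)"
  shows "int (disp (Suc m) \<pi>) - int (inv_count (Suc m) \<pi>) - int (refl_len (Suc m) \<pi>)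
    = int (disp m \<sigma>) - int (inv_count m \<sigma>) - int (refl_len m \<sigma>)
      + (int m + 1 - int (\<sigma> j)) - \<bar>int (\<sigma> j) - int j\<bar>
      - int (card {k. j < k \<and> k \<le> m \<and> \<sigma> k > \<sigma> j})
      + int (card {k. j < k \<and> k \<le> m \<and> \<sigma> k < \<sigma> j}) - 1"
proof -
  have d: "disp (Suc m) \<pi> + nat \<bar>int (\<sigma> j) - int j\<bar> = disp m \<sigma> + (Suc m - j) + (Suc m - \<sigma> j)"
    using disp_ins[OF s j] unfolding \<pi>_def .
  have iv: "inv_count (Suc m) \<pi> + card {k. j < k \<and> k \<le> m \<and> \<sigma> k < \<sigma> j}
     = inv_count m \<sigma> + (Suc m - j) + card {k. j < k \<and> k \<le> m \<and> \<sigma> k > \<sigma> j}"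
    using inv_ins[OF s j] unfolding \<pi>_def .
  have c: "cyc (Suc m) \<pi> = cyc m \<sigma>" using cyc_ins[OF s j] unfolding \<pi>_def .
  have cl: "cyc m \<sigma> \<le> m" using cyc_le .
  have r: "\<sigma> j \<in> {1..m}" using perm_range[OF s j] .
  define A where "A = card {k. j < k \<and> k \<le> m \<and> \<sigma> k > \<sigma> j}"
  define B where "B = card {k. j < k \<and> k \<le> m \<and> \<sigma> k < \<sigma> j}"
  have rl: "int (refl_len (Suc m) \<pi>) = int m + 1 - int (cyc m \<sigma>)"
           "int (refl_len m \<sigma>) = int m - int (cyc m \<sigma>)"
    unfolding refl_len_def c using cl by auto
  have e1: "int (Suc m - j) = int m + 1 - int j" using j by auto
  have e2: "int (Suc m - \<sigma> j) = int m + 1 - int (\<sigma> j)" using r by auto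
  have e5: "int (nat \<bar>int (\<sigma> j) - int j\<bar>) = \<bar>int (\<sigma> j) - int j\<bar>" by simp
  have "int (disp (Suc m) \<pi> + nat \<bar>int (\<sigma> j) - int j\<bar>) = int (disp m \<sigma> + (Suc m - j) + (Suc m - \<sigma> j))"
    using d by (rule arg_cong)
  hence d': "int (disp (Suc m) \<pi>) + \<bar>int (\<sigma> j) - int j\<bar> = int (disp m \<sigma>) + (int m + 1 - int j) + (int m + 1 - int (\<sigma> j))"
    by (simp only: of_nat_add e1 e2 e5)
  have "int (inv_count (Suc m) \<pi> + B) = int (inv_count m \<sigma> + (Suc m - j) + A)"
    using iv unfolding A_def B_def by (rule arg_cong)
  hence iv': "int (inv_count (Suc m) \<pi>) + int B = int (inv_count m \<sigma>) + (int m + 1 - int j) + int A"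
    by (simp only: of_nat_add e1)
  show ?thesis using d' iv' rl unfolding A_def[symmetric] B_def[symmetric] by linarith
qed

lemma SS_ins:
  assumes s: "\<sigma> permutes {1..m}" and j: "j \<in> {1..m}"
  shows "(\<sigma> \<circ> transpose j (Suc m)) \<in> SS (Suc m) \<longleftrightarrow> \<sigma> \<in> SS m \<and> (j = m \<or> \<sigma> j = m)"
proof -
  define \<pi> where "\<pi> = \<sigma> \<circ> transpose j (Suc m)"
  have \<pi>j: "\<pi> j = Suc m" and \<pi>n: "\<pi> (Suc m) = \<sigma> j"
    and \<pi>o: "\<And>k. k \<noteq> j \<Longrightarrow> k \<noteq> Suc m \<Longrightarrow> \<pi> k = \<sigma> k"
    using ins_apply[OF s j] by (auto simp: \<pi>_def)
  have pp: "\<pi> permutes {1..Suc m}" unfolding \<pi>_def by (rule ins_permutes[OF s j])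
  have r: "\<sigma> j \<in> {1..m}" using perm_range[OF s j] .
  have le: "\<And>k. k \<in> {1..m} \<Longrightarrow> \<sigma> k \<le> m" using perm_range[OF s] by fastforce
  have le\<pi>: "\<And>k. k \<in> {1..Suc m} \<Longrightarrow> \<pi> k \<le> Suc m" using perm_range[OF pp] by fastforce
  have inj: "\<And>x y. \<sigma> x = \<sigma> y \<Longrightarrow> x = y" using perm_inj[OF s] by blast
  have jm: "1 \<le> j" "j \<le> m" using j by auto
  have del: "int (disp (Suc m) \<pi>) - int (inv_count (Suc m) \<pi>) - int (refl_len (Suc m) \<pi>)
    = int (disp m \<sigma>) - int (inv_count m \<sigma>) - int (refl_len m \<sigma>)
      + (int m + 1 - int (\<sigma> j)) - \<bar>int (\<sigma> j) - int j\<bar>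
      - int (card {k. j < k \<and> k \<le> m \<and> \<sigma> k > \<sigma> j})
      + int (card {k. j < k \<and> k \<le> m \<and> \<sigma> k < \<sigma> j}) - 1"
    using delta_ins[OF s j] unfolding \<pi>_def .
  have ab: "card {k. j < k \<and> k \<le> m \<and> \<sigma> k < \<sigma> j} + card {k. j < k \<and> k \<le> m \<and> \<sigma> k > \<sigma> j} = m - j"
    using ab_sum[OF s j] .
  have DGs: "inv_count m \<sigma> + refl_len m \<sigma> \<le> disp m \<sigma>" using DG_lower[OF s] .
  have DGp: "inv_count (Suc m) \<pi> + refl_len (Suc m) \<pi> \<le> disp (Suc m) \<pi>" using DG_lower[OF pp] .
  have em: "int (m - j) = int m - int j" using jm by auto
  show ?thesis unfolding \<pi>_def[symmetric]
  proof
    assume P: "\<pi> \<in> SS (Suc m)"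
    hence av: "avoids321 (Suc m) \<pi>" and sh: "shallow (Suc m) \<pi>" unfolding SS_def by auto
    have A0: "{k. j < k \<and> k \<le> m \<and> \<sigma> k > \<sigma> j} = {}"
    proof (rule ccontr)
      assume "{k. j < k \<and> k \<le> m \<and> \<sigma> k > \<sigma> j} \<noteq> {}"
      then obtain k where k: "j < k" "k \<le> m" "\<sigma> k > \<sigma> j" by auto
      have "\<pi> k = \<sigma> k" using \<pi>o k by auto
      moreover have "\<sigma> k \<le> m" using le k jm by auto
      ultimately show False using av k jm \<pi>j \<pi>n unfolding avoids321_def
        by (metis Suc_le_mono le_SucI lessI le_imp_less_Suc less_Suc_eq_le)
    qed
    have B: "int (card {k. j < k \<and> k \<le> m \<and> \<sigma> k < \<sigma> j}) = int m - int j"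
      using ab A0 em by simp
    have shi: "int (inv_count (Suc m) \<pi>) + int (refl_len (Suc m) \<pi>) = int (disp (Suc m) \<pi>)"
      using sh unfolding shallow_def by linarith
    have DGs': "int (inv_count m \<sigma>) + int (refl_len m \<sigma>) \<le> int (disp m \<sigma>)" using DGs by linarith
    have key: "int (inv_count m \<sigma>) + int (refl_len m \<sigma>) = int (disp m \<sigma>) \<and> (j = m \<or> \<sigma> j = m)"
    proof (cases "\<sigma> j \<le> j")
      case True
      hence "\<bar>int (\<sigma> j) - int j\<bar> = int j - int (\<sigma> j)" by simp
      thus ?thesis using del A0 B shi DGs' jm r by (simp; linarith)
    next
      case False
      hence "\<bar>int (\<sigma> j) - int j\<bar> = int (\<sigma> j) - int j" by simp
      thus ?thesis using del A0 B shi DGs' jm r by (simp; linarith)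
    qed
    hence shs: "shallow m \<sigma>" and cond: "j = m \<or> \<sigma> j = m" unfolding shallow_def by linarith+
    have avs: "avoids321 m \<sigma>"
      unfolding avoids321_def
    proof
      assume "\<exists>p q r. 1 \<le> p \<and> p < q \<and> q < r \<and> r \<le> m \<and> \<sigma> q < \<sigma> p \<and> \<sigma> r < \<sigma> q"
      then obtain p q r where pqr: "1 \<le> p" "p < q" "q < r" "r \<le> m" "\<sigma> q < \<sigma> p" "\<sigma> r < \<sigma> q" by blast
      have nav: "\<not> (1 \<le> a \<and> a < b \<and> b < c \<and> c \<le> Suc m \<and> \<pi> b < \<pi> a \<and> \<pi> c < \<pi> b)" for a b c
        using av unfolding avoids321_def by blast
      show False
      proof (cases "j = m")
        case True
        show False
        proof (cases "r = m")
          case True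
          have "\<pi> p = \<sigma> p" "\<pi> q = \<sigma> q" using \<pi>o pqr True \<open>j = m\<close> by auto
          moreover have "\<pi> (Suc m) = \<sigma> r" using \<pi>n True \<open>j = m\<close> by simp
          ultimately show False using nav[of p q "Suc m"] pqr by auto
        next
          case False
          have "\<pi> p = \<sigma> p" "\<pi> q = \<sigma> q" "\<pi> r = \<sigma> r" using \<pi>o pqr False \<open>j = m\<close> by auto
          thus False using nav[of p q r] pqr by auto
        qed
      next
        case False
        hence sj: "\<sigma> j = m" using cond by simp
        have "\<sigma> p \<le> m" using le pqr by auto
        hence qj: "q \<noteq> j" "r \<noteq> j" using pqr sj by auto
        have \<pi>q: "\<pi> q = \<sigma> q" "\<pi> r = \<sigma> r" using \<pi>o qj pqr by auto
        have "\<pi> p > \<pi> q"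
        proof (cases "p = j")
          case True thus ?thesis using \<pi>j \<pi>q le[of q] pqr by auto
        next
          case False thus ?thesis using \<pi>o[of p] \<pi>q pqr by auto
        qed
        thus False using nav[of p q r] pqr \<pi>q by auto
      qed
    qed
    show "\<sigma> \<in> SS m \<and> (j = m \<or> \<sigma> j = m)" using s shs avs cond unfolding SS_def by auto
  next
    assume R: "\<sigma> \<in> SS m \<and> (j = m \<or> \<sigma> j = m)"
    hence shs: "shallow m \<sigma>" and avs: "avoids321 m \<sigma>" and cond: "j = m \<or> \<sigma> j = m"
      unfolding SS_def by auto
    have A0: "{k. j < k \<and> k \<le> m \<and> \<sigma> k > \<sigma> j} = {}"
    proof (rule ccontr)
      assume "{k. j < k \<and> k \<le> m \<and> \<sigma> k > \<sigma> j} \<noteq> {}"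
      then obtain k where k: "j < k" "k \<le> m" "\<sigma> k > \<sigma> j" by auto
      have "\<sigma> k \<le> m" using le k jm by auto
      thus False using cond k by auto
    qed
    have B: "int (card {k. j < k \<and> k \<le> m \<and> \<sigma> k < \<sigma> j}) = int m - int j"
      using ab A0 em by simp
    have shi: "int (inv_count m \<sigma>) + int (refl_len m \<sigma>) = int (disp m \<sigma>)"
      using shs unfolding shallow_def by linarith
    have "int (inv_count (Suc m) \<pi>) + int (refl_len (Suc m) \<pi>) = int (disp (Suc m) \<pi>)"
    proof (cases "\<sigma> j \<le> j")
      case True
      hence "\<bar>int (\<sigma> j) - int j\<bar> = int j - int (\<sigma> j)" by simp
      thus ?thesis using del A0 B shi cond jm r by (simp; linarith)
    next
      case False
      hence "\<bar>int (\<sigma> j) - int j\<bar> = int (\<sigma> j) - int j" by simp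
      thus ?thesis using del A0 B shi cond jm r by (simp; linarith)
    qed
    hence shp: "shallow (Suc m) \<pi>" unfolding shallow_def by linarith
    have nav: "\<not> (1 \<le> a \<and> a < b \<and> b < c \<and> c \<le> m \<and> \<sigma> b < \<sigma> a \<and> \<sigma> c < \<sigma> b)" for a b c
      using avs unfolding avoids321_def by blast
    have avp: "avoids321 (Suc m) \<pi>"
      unfolding avoids321_def
    proof
      assume "\<exists>p q r. 1 \<le> p \<and> p < q \<and> q < r \<and> r \<le> Suc m \<and> \<pi> q < \<pi> p \<and> \<pi> r < \<pi> q"
      then obtain p q r where pqr: "1 \<le> p" "p < q" "q < r" "r \<le> Suc m" "\<pi> q < \<pi> p" "\<pi> r < \<pi> q" by blast
      have "\<pi> p \<le> Suc m" using le\<pi> pqr by auto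
      hence qj: "q \<noteq> j" "r \<noteq> j" using pqr \<pi>j by auto
      have qn: "q \<noteq> Suc m" "p \<noteq> Suc m" using pqr by auto
      have \<pi>q: "\<pi> q = \<sigma> q" using \<pi>o qj qn by auto
      show False
      proof (cases "j = m")
        case True
        show False
        proof (cases "r = Suc m")
          case True
          have "q < m" using qj \<open>j = m\<close> pqr True by auto
          hence "p \<noteq> j" using pqr \<open>j = m\<close> by auto
          hence "\<pi> p = \<sigma> p" using \<pi>o qn by auto
          moreover have "\<pi> r = \<sigma> m" using True \<pi>n \<open>j = m\<close> by simp
          ultimately show False using nav[of p q m] pqr \<pi>q \<open>q < m\<close> by auto
        next
          case False
          have "r < m" using qj \<open>j = m\<close> pqr False by auto
          hence "p \<noteq> j" using pqr \<open>j = m\<close> by auto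
          hence "\<pi> p = \<sigma> p" "\<pi> r = \<sigma> r" using \<pi>o qn qj False by auto
          thus False using nav[of p q r] pqr \<pi>q \<open>r < m\<close> by auto
        qed
      next
        case False
        hence sj: "\<sigma> j = m" using cond by simp
        have rn: "r \<noteq> Suc m"
        proof
          assume "r = Suc m"
          hence "\<pi> q > m" using pqr \<pi>n sj by auto
          moreover have "\<sigma> q \<le> m" using le[of q] pqr qn by auto
          ultimately show False using \<pi>q by auto
        qed
        have \<pi>r: "\<pi> r = \<sigma> r" using \<pi>o qj rn by auto
        have "\<sigma> p > \<sigma> q"
        proof (cases "p = j")
          case True
          have "\<sigma> q \<le> m" using le[of q] pqr qn by auto
          moreover have "\<sigma> q \<noteq> m" using sj qj inj by metis
          ultimately show ?thesis using True sj by auto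
        next
          case False thus ?thesis using \<pi>o[of p] \<pi>q pqr qn by auto
        qed
        thus False using nav[of p q r] pqr \<pi>q \<pi>r rn by auto
      qed
    qed
    show "\<pi> \<in> SS (Suc m)" using pp shp avp unfolding SS_def by auto
  qed
qed

definition DS :: "nat \<Rightarrow> (nat \<Rightarrow> nat) \<Rightarrow> nat set" where
  "DS n p = {i. 1 \<le> i \<and> i < n \<and> p i > p (Suc i)}"

lemma descents_DS: "descents n p = card (DS n p)"
  unfolding descents_def DS_def by simp

lemma finite_DS: "finite (DS n p)"
  unfolding DS_def by (rule finite_subset[of _ "{..n}"]) auto

lemma des_fix:
  assumes s: "\<sigma> permutes {1..m}"
  shows "descents (Suc m) \<sigma> = descents m \<sigma>"
proof -
  have sn: "\<sigma> (Suc m) = Suc m" using permutes_not_in[OF s, of "Suc m"] by auto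
  have "DS (Suc m) \<sigma> = DS m \<sigma>"
  proof
    show "DS (Suc m) \<sigma> \<subseteq> DS m \<sigma>"
    proof
      fix i assume i: "i \<in> DS (Suc m) \<sigma>"
      have "i \<noteq> m"
      proof
        assume "i = m"
        hence "\<sigma> m > Suc m" using i sn unfolding DS_def by auto
        moreover have "m \<in> {1..m}" using i \<open>i = m\<close> unfolding DS_def by auto
        ultimately show False using perm_range[OF s, of m] by auto
      qed
      thus "i \<in> DS m \<sigma>" using i unfolding DS_def by auto
    qed
    show "DS m \<sigma> \<subseteq> DS (Suc m) \<sigma>" unfolding DS_def by auto
  qed
  thus ?thesis unfolding descents_DS by simp
qed

definition dsc :: "nat \<Rightarrow> (nat \<Rightarrow> nat) \<Rightarrow> bool" where
  "dsc n p \<longleftrightarrow> 2 \<le> n \<and> p (n - 1) > p n"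

lemma des_ins_last:
  assumes s: "\<sigma> permutes {1..m}" and m: "1 \<le> m"
  shows "descents (Suc m) (\<sigma> \<circ> transpose m (Suc m)) = (if dsc m \<sigma> then descents m \<sigma> else Suc (descents m \<sigma>))"
proof -
  have j: "m \<in> {1..m}" using m by auto
  define \<pi> where "\<pi> = \<sigma> \<circ> transpose m (Suc m)"
  have \<pi>j: "\<pi> m = Suc m" and \<pi>n: "\<pi> (Suc m) = \<sigma> m"
    and \<pi>o: "\<And>k. k \<noteq> m \<Longrightarrow> k \<noteq> Suc m \<Longrightarrow> \<pi> k = \<sigma> k"
    using ins_apply[OF s j] by (auto simp: \<pi>_def)
  have sm: "\<sigma> m \<le> m" using perm_range[OF s j] by auto
  have eq: "DS (Suc m) \<pi> = insert m (DS m \<sigma> - {m - 1})"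
  proof
    show "DS (Suc m) \<pi> \<subseteq> insert m (DS m \<sigma> - {m - 1})"
    proof
      fix i assume i: "i \<in> DS (Suc m) \<pi>"
      show "i \<in> insert m (DS m \<sigma> - {m - 1})"
      proof (cases "i = m")
        case True thus ?thesis by simp
      next
        case False
        hence im: "i < m" using i unfolding DS_def by auto
        show ?thesis
        proof (cases "i = m - 1")
          case True
          hence "\<pi> (Suc i) = Suc m" using \<pi>j im by (simp add: Suc_diff_1)
          moreover have "\<pi> i \<le> Suc m" using perm_range[OF ins_permutes[OF s j], of i] i im
            unfolding \<pi>_def DS_def by auto
          ultimately show ?thesis using i unfolding DS_def by auto
        next
          case False
          have "Suc i < m" using False im by auto
          hence "\<pi> i = \<sigma> i" "\<pi> (Suc i) = \<sigma> (Suc i)" using \<pi>o im by auto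
          thus ?thesis using i im False unfolding DS_def by auto
        qed
      qed
    qed
    show "insert m (DS m \<sigma> - {m - 1}) \<subseteq> DS (Suc m) \<pi>"
    proof
      fix i assume i: "i \<in> insert m (DS m \<sigma> - {m - 1})"
      show "i \<in> DS (Suc m) \<pi>"
      proof (cases "i = m")
        case True thus ?thesis using \<pi>j \<pi>n sm m unfolding DS_def by auto
      next
        case False
        hence "i \<in> DS m \<sigma>" "i \<noteq> m - 1" using i by auto
        hence "Suc i < m" "1 \<le> i" "\<sigma> i > \<sigma> (Suc i)" unfolding DS_def by auto
        moreover hence "\<pi> i = \<sigma> i" "\<pi> (Suc i) = \<sigma> (Suc i)" using \<pi>o by auto
        ultimately show ?thesis unfolding DS_def by auto
      qed
    qed
  qed
  have mn: "m \<notin> DS m \<sigma>" unfolding DS_def by auto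
  have iff: "m - 1 \<in> DS m \<sigma> \<longleftrightarrow> dsc m \<sigma>" unfolding DS_def dsc_def using m
    by (cases m) auto
  show ?thesis
  proof (cases "dsc m \<sigma>")
    case True
    hence "m - 1 \<in> DS m \<sigma>" using iff by simp
    hence "card (insert m (DS m \<sigma> - {m - 1})) = card (DS m \<sigma>)"
      using mn finite_DS by (simp add: card_insert_if) (metis One_nat_def Suc_pred card_Diff_singleton card_gt_0_iff empty_iff)
    thus ?thesis using True eq unfolding descents_DS \<pi>_def[symmetric] by simp
  next
    case False
    hence "m - 1 \<notin> DS m \<sigma>" using iff by simp
    hence "card (insert m (DS m \<sigma> - {m - 1})) = Suc (card (DS m \<sigma>))"
      using mn finite_DS by simp
    thus ?thesis using False eq unfolding descents_DS \<pi>_def[symmetric] by simp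
  qed
qed

lemma des_ins_mid:
  assumes s: "\<sigma> permutes {1..m}" and j: "j \<in> {1..m}" and jm: "j \<noteq> m" and sj: "\<sigma> j = m"
  shows "descents (Suc m) (\<sigma> \<circ> transpose j (Suc m)) = descents m \<sigma>"
proof -
  define \<pi> where "\<pi> = \<sigma> \<circ> transpose j (Suc m)"
  have \<pi>j: "\<pi> j = Suc m" and \<pi>n: "\<pi> (Suc m) = \<sigma> j"
    and \<pi>o: "\<And>k. k \<noteq> j \<Longrightarrow> k \<noteq> Suc m \<Longrightarrow> \<pi> k = \<sigma> k"
    using ins_apply[OF s j] by (auto simp: \<pi>_def)
  have le: "\<And>k. k \<in> {1..m} \<Longrightarrow> \<sigma> k \<le> m" using perm_range[OF s] by fastforce
  have inj: "\<And>x y. \<sigma> x = \<sigma> y \<Longrightarrow> x = y" using perm_inj[OF s] by blast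
  have ne: "\<And>k. k \<noteq> j \<Longrightarrow> \<sigma> k \<noteq> m" using inj sj by metis
  have "DS (Suc m) \<pi> = DS m \<sigma>"
  proof (rule set_eqI)
    fix i
    show "i \<in> DS (Suc m) \<pi> \<longleftrightarrow> i \<in> DS m \<sigma>"
    proof (cases "1 \<le> i \<and> i \<le> m")
      case False thus ?thesis unfolding DS_def by auto
    next
      case True
      show ?thesis
      proof (cases "i = m")
        case True
        have "\<pi> m = \<sigma> m" using \<pi>o jm by auto
        moreover have "\<sigma> m < m" using le[of m] ne[of m] jm True \<open>1 \<le> i \<and> i \<le> m\<close> by fastforce
        ultimately show ?thesis using True \<pi>n sj unfolding DS_def by auto
      next
        case False
        hence im: "i < m" using True by auto
        have r1: "\<sigma> (Suc i) \<le> m" using le[of "Suc i"] im by auto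
        show ?thesis
        proof (cases "i = j")
          case True
          have "\<sigma> (Suc i) \<noteq> m" using ne True by auto
          hence "\<sigma> (Suc i) < m" using r1 by auto
          moreover have "\<pi> (Suc i) = \<sigma> (Suc i)" using \<pi>o True im by auto
          ultimately show ?thesis using True \<pi>j sj im \<open>1 \<le> i \<and> i \<le> m\<close> unfolding DS_def by auto
        next
          case False
          have \<pi>i: "\<pi> i = \<sigma> i" using \<pi>o False im by auto
          have ri: "\<sigma> i \<le> m" using le[of i] \<open>1 \<le> i \<and> i \<le> m\<close> by auto
          show ?thesis
          proof (cases "Suc i = j")
            case True
            thus ?thesis using \<pi>i \<pi>j sj ri im unfolding DS_def by auto
          next
            case False
            hence "\<pi> (Suc i) = \<sigma> (Suc i)" using \<pi>o im by auto
            thus ?thesis using \<pi>i im unfolding DS_def by auto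
          qed
        qed
      qed
    qed
  qed
  thus ?thesis unfolding descents_DS \<pi>_def by simp
qed

lemma finite_SS: "finite (SS n)"
  by (rule finite_subset[of _ "{p. p permutes {1..n}}"]) (auto simp: SS_def finite_permutations)

lemma SS_perm: "\<pi> \<in> SS n \<Longrightarrow> \<pi> permutes {1..n}"
  unfolding SS_def by auto

lemma restrict_fix:
  assumes p: "\<pi> permutes {1..Suc m}" and f: "\<pi> (Suc m) = Suc m"
  shows "\<pi> permutes {1..m}"
proof -
  have "\<And>x. x \<in> {1..Suc m} - {1..m} \<Longrightarrow> \<pi> x = x" using f by (auto simp: le_Suc_eq)
  thus ?thesis using permutes_superset[OF p] by blast
qed

lemma P0_eq: "{\<pi> \<in> SS (Suc m). \<pi> (Suc m) = Suc m} = SS m"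
proof
  show "{\<pi> \<in> SS (Suc m). \<pi> (Suc m) = Suc m} \<subseteq> SS m"
  proof
    fix \<pi> assume "\<pi> \<in> {\<pi> \<in> SS (Suc m). \<pi> (Suc m) = Suc m}"
    hence a: "\<pi> \<in> SS (Suc m)" "\<pi> (Suc m) = Suc m" by auto
    have s: "\<pi> permutes {1..m}" using restrict_fix[OF SS_perm[OF a(1)] a(2)] .
    show "\<pi> \<in> SS m" using SS_fix[OF s] a by simp
  qed
  show "SS m \<subseteq> {\<pi> \<in> SS (Suc m). \<pi> (Suc m) = Suc m}"
  proof
    fix \<pi> assume a: "\<pi> \<in> SS m"
    have s: "\<pi> permutes {1..m}" using SS_perm[OF a] .
    show "\<pi> \<in> {\<pi> \<in> SS (Suc m). \<pi> (Suc m) = Suc m}"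
      using SS_fix[OF s] a permutes_not_in[OF s, of "Suc m"] by auto
  qed
qed

lemma cover:
  assumes p: "\<pi> \<in> SS (Suc m)" and nf: "\<pi> (Suc m) \<noteq> Suc m"
  shows "\<pi> m = Suc m \<or> (\<pi> (Suc m) = m \<and> \<pi> m \<noteq> Suc m)"
proof -
  obtain j \<sigma> where j: "j \<in> {1..m}" and s: "\<sigma> permutes {1..m}" and pe: "\<pi> = \<sigma> \<circ> transpose j (Suc m)"
    using decomp[OF SS_perm[OF p] nf] by blast
  have "j = m \<or> \<sigma> j = m" using SS_ins[OF s j] p pe by simp
  moreover have "\<pi> j = Suc m" "\<pi> (Suc m) = \<sigma> j" using ins_apply[OF s j] pe by auto
  ultimately show ?thesis by auto
qed

context fixes x :: real begin

definition W :: "nat \<Rightarrow> real" where "W n = (\<Sum>\<pi>\<in>SS n. x ^ descents n \<pi>)"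
definition Dd :: "nat \<Rightarrow> real" where "Dd n = (\<Sum>\<pi>\<in>SS n \<inter> {\<pi>. dsc n \<pi>}. x ^ descents n \<pi>)"
definition FF :: "nat \<Rightarrow> real" where "FF n = (\<Sum>\<pi>\<in>SS n \<inter> {\<pi>. \<pi> n = n}. x ^ descents n \<pi>)"

lemma sum_P0: "(\<Sum>\<pi>\<in>SS (Suc m) \<inter> {\<pi>. \<pi> (Suc m) = Suc m}. x ^ descents (Suc m) \<pi>) = W m"
proof -
  have e: "SS (Suc m) \<inter> {\<pi>. \<pi> (Suc m) = Suc m} = SS m" using P0_eq by auto
  show ?thesis unfolding e W_def
    by (rule sum.cong) (auto simp: des_fix[OF SS_perm])
qed

lemma FF_Suc: "FF (Suc m) = W m"
  using sum_P0 unfolding FF_def by simp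

lemma sum_P1:
  assumes m: "1 \<le> m"
  shows "(\<Sum>\<pi>\<in>{\<pi> \<in> SS (Suc m). \<pi> m = Suc m}. x ^ descents (Suc m) \<pi>)
       = (\<Sum>\<sigma>\<in>SS m. x ^ (if dsc m \<sigma> then descents m \<sigma> else Suc (descents m \<sigma>)))"
proof -
  have jm: "m \<in> {1..m}" using m by auto
  let ?t = "transpose m (Suc m)"
  show ?thesis
  proof (rule sum.reindex_bij_witness[of _ "\<lambda>\<pi>. \<pi> \<circ> ?t" "\<lambda>\<sigma>. \<sigma> \<circ> ?t", symmetric])
    fix \<sigma> assume a: "\<sigma> \<in> SS m"
    show "\<sigma> \<circ> ?t \<circ> ?t = \<sigma>" by (rule ext) simp
    have s: "\<sigma> permutes {1..m}" using SS_perm[OF a] .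
    show "\<sigma> \<circ> ?t \<in> {\<pi> \<in> SS (Suc m). \<pi> m = Suc m}"
      using SS_ins[OF s jm] a ins_apply(1)[OF s jm] by simp
    show "x ^ descents (Suc m) (\<sigma> \<circ> ?t) = x ^ (if dsc m \<sigma> then descents m \<sigma> else Suc (descents m \<sigma>))"
      using des_ins_last[OF s m] by simp
  next
    fix \<pi> assume a: "\<pi> \<in> {\<pi> \<in> SS (Suc m). \<pi> m = Suc m}"
    show "\<pi> \<circ> ?t \<circ> ?t = \<pi>" by (rule ext) simp
    have p: "\<pi> permutes {1..Suc m}" using a SS_perm by auto
    have nf: "\<pi> (Suc m) \<noteq> Suc m" using a perm_inj[OF p, of m "Suc m"] by auto
    obtain j \<sigma> where j: "j \<in> {1..m}" and s: "\<sigma> permutes {1..m}" and pe: "\<pi> = \<sigma> \<circ> transpose j (Suc m)"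
      using decomp[OF p nf] by blast
    have "\<pi> j = Suc m" using ins_apply[OF s j] pe by simp
    hence "j = m" using a perm_inj[OF p, of j m] by auto
    hence "\<pi> \<circ> ?t = \<sigma>" using pe by (auto simp: fun_eq_iff)
    moreover have "\<sigma> \<in> SS m" using SS_ins[OF s j] a pe \<open>j = m\<close> by simp
    ultimately show "\<pi> \<circ> ?t \<in> SS m" by simp
  qed
qed

lemma sum_P2:
  shows "(\<Sum>\<pi>\<in>{\<pi> \<in> SS (Suc m). \<pi> (Suc m) = m \<and> \<pi> m \<noteq> Suc m}. x ^ descents (Suc m) \<pi>)
       = (\<Sum>\<sigma>\<in>{\<sigma> \<in> SS m. \<sigma> m \<noteq> m}. x ^ descents m \<sigma>)"
proof (rule sum.reindex_bij_witness[of _ "\<lambda>\<pi>. \<pi> \<circ> transpose (inv \<pi> (Suc m)) (Suc m)"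
      "\<lambda>\<sigma>. \<sigma> \<circ> transpose (inv \<sigma> m) (Suc m)", symmetric])
  fix \<sigma> assume a: "\<sigma> \<in> {\<sigma> \<in> SS m. \<sigma> m \<noteq> m}"
  have s: "\<sigma> permutes {1..m}" using a SS_perm by auto
  define j where "j = inv \<sigma> m"
  have sj: "\<sigma> j = m" unfolding j_def using permutes_inverses(1)[OF s] by simp
  have j: "j \<in> {1..m}"
  proof (rule ccontr)
    assume "j \<notin> {1..m}"
    hence "\<sigma> j = j" using permutes_not_in[OF s] by blast
    hence "j = m" using sj by simp
    thus False using a sj by auto
  qed
  have jm: "j \<noteq> m" using a sj by auto
  define \<pi> where "\<pi> = \<sigma> \<circ> transpose j (Suc m)"
  have p: "\<pi> permutes {1..Suc m}" unfolding \<pi>_def using ins_permutes[OF s j] .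
  have \<pi>j: "\<pi> j = Suc m" and \<pi>n: "\<pi> (Suc m) = \<sigma> j"
    and \<pi>o: "\<And>k. k \<noteq> j \<Longrightarrow> k \<noteq> Suc m \<Longrightarrow> \<pi> k = \<sigma> k"
    using ins_apply[OF s j] by (auto simp: \<pi>_def)
  have ip: "inv \<pi> (Suc m) = j" using permutes_inv_eq[OF p] \<pi>j by simp
  show "\<sigma> \<circ> transpose (inv \<sigma> m) (Suc m) \<circ> transpose (inv (\<sigma> \<circ> transpose (inv \<sigma> m) (Suc m)) (Suc m)) (Suc m) = \<sigma>"
    using ip unfolding \<pi>_def j_def[symmetric] by (auto simp: fun_eq_iff)
  have "\<sigma> m \<le> m" using perm_range[OF s, of m] j by auto
  hence "\<pi> m \<noteq> Suc m" using \<pi>o[of m] jm by auto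
  moreover have "\<pi> \<in> SS (Suc m)" using SS_ins[OF s j] a sj unfolding \<pi>_def by simp
  ultimately show "\<sigma> \<circ> transpose (inv \<sigma> m) (Suc m) \<in> {\<pi> \<in> SS (Suc m). \<pi> (Suc m) = m \<and> \<pi> m \<noteq> Suc m}"
    using \<pi>n sj unfolding \<pi>_def j_def by simp
  show "x ^ descents (Suc m) (\<sigma> \<circ> transpose (inv \<sigma> m) (Suc m)) = x ^ descents m \<sigma>"
    using des_ins_mid[OF s j jm sj] unfolding j_def by simp
next
  fix \<pi> assume a: "\<pi> \<in> {\<pi> \<in> SS (Suc m). \<pi> (Suc m) = m \<and> \<pi> m \<noteq> Suc m}"
  have p: "\<pi> permutes {1..Suc m}" using a SS_perm by auto
  have nf: "\<pi> (Suc m) \<noteq> Suc m" using a by auto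
  obtain j \<sigma> where j: "j \<in> {1..m}" and s: "\<sigma> permutes {1..m}" and pe: "\<pi> = \<sigma> \<circ> transpose j (Suc m)"
    using decomp[OF p nf] by blast
  have \<pi>j: "\<pi> j = Suc m" and \<pi>n: "\<pi> (Suc m) = \<sigma> j"
    using ins_apply[OF s j] pe by auto
  have ip: "inv \<pi> (Suc m) = j" using permutes_inv_eq[OF p] \<pi>j by simp
  have bk0: "\<pi> \<circ> transpose j (Suc m) = \<sigma>" unfolding pe by (rule ext) simp
  have bk: "\<pi> \<circ> transpose (inv \<pi> (Suc m)) (Suc m) = \<sigma>" using bk0 ip by simp
  have sj: "\<sigma> j = m" using \<pi>n a by simp
  have jm: "j \<noteq> m" using \<pi>j a by auto
  have isg: "inv \<sigma> m = j" using permutes_inv_eq[OF s] sj by simp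
  show "\<pi> \<circ> transpose (inv \<pi> (Suc m)) (Suc m) \<circ> transpose (inv (\<pi> \<circ> transpose (inv \<pi> (Suc m)) (Suc m)) m) (Suc m) = \<pi>"
    unfolding bk isg using pe by simp
  have "\<sigma> \<in> SS m" using SS_ins[OF s j] a pe by simp
  moreover have "\<sigma> m \<noteq> m" using sj jm perm_inj[OF s, of m j] by auto
  ultimately show "\<pi> \<circ> transpose (inv \<pi> (Suc m)) (Suc m) \<in> {\<sigma> \<in> SS m. \<sigma> m \<noteq> m}"
    unfolding bk by simp
qed

lemma P1_nf: "\<pi> \<in> SS (Suc m) \<Longrightarrow> \<pi> m = Suc m \<Longrightarrow> \<pi> (Suc m) \<noteq> Suc m"
  using perm_inj[OF SS_perm, of \<pi> "Suc m" m "Suc m"] by auto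

lemma W_Suc:
  assumes m: "1 \<le> m"
  shows "W (Suc m) = W m + (Dd m + x * (W m - Dd m)) + (W m - FF m)"
proof -
  let ?g = "\<lambda>\<pi>. x ^ descents (Suc m) \<pi>"
  have fin: "finite (SS (Suc m))" "finite (SS m)" using finite_SS by auto
  have W1: "W (Suc m) = sum ?g (SS (Suc m) \<inter> {\<pi>. \<pi> (Suc m) = Suc m}) + sum ?g (SS (Suc m) - {\<pi>. \<pi> (Suc m) = Suc m})"
    unfolding W_def by (rule sum.Int_Diff[OF fin(1)])
  have split: "SS (Suc m) - {\<pi>. \<pi> (Suc m) = Suc m} = {\<pi> \<in> SS (Suc m). \<pi> m = Suc m} \<union> {\<pi> \<in> SS (Suc m). \<pi> (Suc m) = m \<and> \<pi> m \<noteq> Suc m}"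
    using cover P1_nf m by auto
  have disj: "{\<pi> \<in> SS (Suc m). \<pi> m = Suc m} \<inter> {\<pi> \<in> SS (Suc m). \<pi> (Suc m) = m \<and> \<pi> m \<noteq> Suc m} = {}" by auto
  have W2: "sum ?g (SS (Suc m) - {\<pi>. \<pi> (Suc m) = Suc m}) = sum ?g {\<pi> \<in> SS (Suc m). \<pi> m = Suc m} + sum ?g {\<pi> \<in> SS (Suc m). \<pi> (Suc m) = m \<and> \<pi> m \<noteq> Suc m}"
    unfolding split by (rule sum.union_disjoint) (use fin disj in auto)
  have S1: "sum ?g {\<pi> \<in> SS (Suc m). \<pi> m = Suc m} = Dd m + x * (W m - Dd m)"
  proof -
    let ?h = "\<lambda>\<sigma>. x ^ (if dsc m \<sigma> then descents m \<sigma> else Suc (descents m \<sigma>))"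
    have "sum ?h (SS m) = sum ?h (SS m \<inter> {\<sigma>. dsc m \<sigma>}) + sum ?h (SS m - {\<sigma>. dsc m \<sigma>})"
      by (rule sum.Int_Diff[OF fin(2)])
    also have "sum ?h (SS m \<inter> {\<sigma>. dsc m \<sigma>}) = Dd m" unfolding Dd_def by (rule sum.cong) auto
    also have "sum ?h (SS m - {\<sigma>. dsc m \<sigma>}) = x * sum (\<lambda>\<sigma>. x ^ descents m \<sigma>) (SS m - {\<sigma>. dsc m \<sigma>})"
      by (simp add: sum_distrib_left)
    also have "sum (\<lambda>\<sigma>. x ^ descents m \<sigma>) (SS m - {\<sigma>. dsc m \<sigma>}) = W m - Dd m"
      unfolding W_def Dd_def using sum.Int_Diff[OF fin(2), of "\<lambda>\<sigma>. x ^ descents m \<sigma>" "{\<sigma>. dsc m \<sigma>}"] by simp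
    finally show ?thesis using sum_P1[OF m] by simp
  qed
  have S2: "sum ?g {\<pi> \<in> SS (Suc m). \<pi> (Suc m) = m \<and> \<pi> m \<noteq> Suc m} = W m - FF m"
  proof -
    have "{\<sigma> \<in> SS m. \<sigma> m \<noteq> m} = SS m - {\<sigma>. \<sigma> m = m}" by auto
    hence "sum (\<lambda>\<sigma>. x ^ descents m \<sigma>) {\<sigma> \<in> SS m. \<sigma> m \<noteq> m} = W m - FF m"
      unfolding W_def FF_def using sum.Int_Diff[OF fin(2), of "\<lambda>\<sigma>. x ^ descents m \<sigma>" "{\<sigma>. \<sigma> m = m}"] by simp
    thus ?thesis using sum_P2 by simp
  qed
  show ?thesis using W1 W2 S1 S2 sum_P0 by simp
qed

lemma Dd_Suc:
  assumes m: "1 \<le> m"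
  shows "Dd (Suc m) = Dd m + x * (W m - Dd m)"
proof -
  have eq: "SS (Suc m) \<inter> {\<pi>. dsc (Suc m) \<pi>} = {\<pi> \<in> SS (Suc m). \<pi> m = Suc m}"
  proof
    show "SS (Suc m) \<inter> {\<pi>. dsc (Suc m) \<pi>} \<subseteq> {\<pi> \<in> SS (Suc m). \<pi> m = Suc m}"
    proof
      fix \<pi> assume a: "\<pi> \<in> SS (Suc m) \<inter> {\<pi>. dsc (Suc m) \<pi>}"
      hence gt: "\<pi> m > \<pi> (Suc m)" and p: "\<pi> \<in> SS (Suc m)" unfolding dsc_def by auto
      have r: "\<pi> m \<le> Suc m" using perm_range[OF SS_perm[OF p], of m] m by auto
      have nf: "\<pi> (Suc m) \<noteq> Suc m" using gt r by auto
      show "\<pi> \<in> {\<pi> \<in> SS (Suc m). \<pi> m = Suc m}" using cover[OF p nf] gt r p by auto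
    qed
    show "{\<pi> \<in> SS (Suc m). \<pi> m = Suc m} \<subseteq> SS (Suc m) \<inter> {\<pi>. dsc (Suc m) \<pi>}"
    proof
      fix \<pi> assume a: "\<pi> \<in> {\<pi> \<in> SS (Suc m). \<pi> m = Suc m}"
      hence p: "\<pi> \<in> SS (Suc m)" and pm: "\<pi> m = Suc m" by auto
      have "\<pi> (Suc m) \<le> Suc m" using perm_range[OF SS_perm[OF p], of "Suc m"] by auto
      moreover have "\<pi> (Suc m) \<noteq> Suc m" using P1_nf[OF p pm] .
      ultimately show "\<pi> \<in> SS (Suc m) \<inter> {\<pi>. dsc (Suc m) \<pi>}" using p pm m unfolding dsc_def by auto
    qed
  qed
  have "Dd (Suc m) = (\<Sum>\<sigma>\<in>SS m. x ^ (if dsc m \<sigma> then descents m \<sigma> else Suc (descents m \<sigma>)))"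
    unfolding Dd_def eq using sum_P1[OF m] .
  also have "\<dots> = Dd m + x * (W m - Dd m)"
  proof -
    let ?h = "\<lambda>\<sigma>. x ^ (if dsc m \<sigma> then descents m \<sigma> else Suc (descents m \<sigma>))"
    have fin: "finite (SS m)" using finite_SS by auto
    have "sum ?h (SS m) = sum ?h (SS m \<inter> {\<sigma>. dsc m \<sigma>}) + sum ?h (SS m - {\<sigma>. dsc m \<sigma>})"
      by (rule sum.Int_Diff[OF fin])
    also have "sum ?h (SS m \<inter> {\<sigma>. dsc m \<sigma>}) = Dd m" unfolding Dd_def by (rule sum.cong) auto
    also have "sum ?h (SS m - {\<sigma>. dsc m \<sigma>}) = x * sum (\<lambda>\<sigma>. x ^ descents m \<sigma>) (SS m - {\<sigma>. dsc m \<sigma>})"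
      by (simp add: sum_distrib_left)
    also have "sum (\<lambda>\<sigma>. x ^ descents m \<sigma>) (SS m - {\<sigma>. dsc m \<sigma>}) = W m - Dd m"
      unfolding W_def Dd_def using sum.Int_Diff[OF fin, of "\<lambda>\<sigma>. x ^ descents m \<sigma>" "{\<sigma>. dsc m \<sigma>}"] by simp
    finally show ?thesis .
  qed
  finally show ?thesis .
qed

lemma SS_1: "SS 1 = {id}"
proof -
  have perm: "p permutes {1..1} \<longleftrightarrow> p = id" for p :: "nat \<Rightarrow> nat" by simp
  have cyc1: "cyc 1 id = 1" unfolding cyc_def by simp
  have "inv_count 1 id = card ({}::(nat \<times> nat) set)" unfolding inv_count_def by (rule arg_cong[where f=card]) auto
  moreover have "disp 1 id = 0" unfolding disp_def by simp
  moreover have "refl_len 1 id = 0" unfolding refl_len_def using cyc1 by simp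
  ultimately have "shallow 1 id" unfolding shallow_def by simp
  moreover have "avoids321 1 id" unfolding avoids321_def by auto
  ultimately show ?thesis unfolding SS_def using perm by auto
qed

lemma base: "W 1 = 1" "Dd 1 = 0" "FF 1 = 1"
proof -
  have d: "descents 1 id = 0" unfolding descents_def by simp
  show "W 1 = 1" unfolding W_def SS_1 using d by simp
  show "Dd 1 = 0" unfolding Dd_def SS_1 dsc_def by simp
  show "FF 1 = 1" unfolding FF_def SS_1 using d by simp
qed

lemma des_lt: "1 \<le> n \<Longrightarrow> descents n p < n"
proof -
  assume n: "1 \<le> n"
  have "DS n p \<subseteq> {1..<n}" unfolding DS_def by auto
  hence "card (DS n p) \<le> card {1..<n}" by (rule card_mono[rotated]) simp
  thus ?thesis using n unfolding descents_DS by simp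
qed

lemma W_acnt:
  assumes n: "1 \<le> n"
  shows "W n = (\<Sum>k<n. real (a_cnt n k) * x ^ k)"
proof -
  have ac: "a_cnt n k = card {\<pi> \<in> SS n. descents n \<pi> = k}" for k
    unfolding a_cnt_def SS_def by (rule arg_cong[where f = card]) auto
  have "W n = (\<Sum>\<pi>\<in>SS n. \<Sum>k<n. if descents n \<pi> = k then x ^ k else 0)"
    unfolding W_def by (rule sum.cong) (use des_lt[OF n] in auto)
  also have "\<dots> = (\<Sum>k<n. \<Sum>\<pi>\<in>SS n. if descents n \<pi> = k then x ^ k else 0)"
    by (rule sum.swap)
  also have "\<dots> = (\<Sum>k<n. real (a_cnt n k) * x ^ k)"
  proof (rule sum.cong[OF refl])
    fix k
    have "(\<Sum>\<pi>\<in>SS n. if descents n \<pi> = k then x ^ k else 0) = (\<Sum>\<pi>\<in>{\<pi> \<in> SS n. descents n \<pi> = k}. x ^ k)"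
      by (rule sum.inter_filter[symmetric, OF finite_SS])
    also have "\<dots> = real (a_cnt n k) * x ^ k" unfolding ac by simp
    finally show "(\<Sum>\<pi>\<in>SS n. if descents n \<pi> = k then x ^ k else 0) = real (a_cnt n k) * x ^ k" .
  qed
  finally show ?thesis .
qed

end

lemma W_rec:
  fixes x :: real
  shows "W x (k + 4) = 3 * W x (k + 3) - (3 - 2 * x) * W x (k + 2) + (1 - x) * W x (k + 1)"
proof -
  have E1: "W x (k + 4) = W x (k + 3) + (Dd x (k + 3) + x * (W x (k + 3) - Dd x (k + 3))) + (W x (k + 3) - W x (k + 2))"
    using W_Suc[of "k + 3" x] FF_Suc[of x "k + 2"] by (simp add: numeral_eq_Suc)
  have E2: "W x (k + 3) = W x (k + 2) + (Dd x (k + 2) + x * (W x (k + 2) - Dd x (k + 2))) + (W x (k + 2) - W x (k + 1))"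
    using W_Suc[of "k + 2" x] FF_Suc[of x "k + 1"] by (simp add: numeral_eq_Suc)
  have E3: "Dd x (k + 3) = Dd x (k + 2) + x * (W x (k + 2) - Dd x (k + 2))"
    using Dd_Suc[of "k + 2" x] by (simp add: numeral_eq_Suc)
  show ?thesis unfolding E1 E3 by (subst E2)+ (simp add: algebra_simps)
qed

lemma W_init:
  fixes x :: real
  shows "W x 1 = 1" "W x 2 = 1 + x" "W x 3 = 1 + 4 * x"
proof -
  show w1: "W x 1 = 1" using base by simp
  have d2: "Dd x 2 = x" using Dd_Suc[of 1 x] base by (simp add: numeral_eq_Suc)
  show w2: "W x 2 = 1 + x" using W_Suc[of 1 x] base by (simp add: numeral_eq_Suc)
  have f2: "FF x 2 = 1" using FF_Suc[of x 1] base by (simp add: numeral_eq_Suc)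
  show "W x 3 = 1 + 4 * x" using W_Suc[of 2 x] d2 w2 f2 by (simp add: numeral_eq_Suc algebra_simps)
qed

lemma A_nth: "fps_nth (A_gf x) n = (if n = 0 then 0 else W x n)"
  unfolding A_gf_def using W_acnt[of n x] by simp

theorem theorem6p3:
  fixes x :: real
  shows "A_gf x =
    (fps_X - 2 * fps_X ^ 2 + fps_const x * fps_X ^ 2 + fps_X ^ 3 - fps_const x * fps_X ^ 3) /
    (1 - 3 * fps_X + 3 * fps_X ^ 2 - 2 * fps_const x * fps_X ^ 2 - fps_X ^ 3 + fps_const x * fps_X ^ 3)"
proof -
  define A where "A = A_gf x"
  define num :: "real fps" where "num = fps_X - 2 * fps_X ^ 2 + fps_const x * fps_X ^ 2 + fps_X ^ 3 - fps_const x * fps_X ^ 3"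
  define den :: "real fps" where "den = 1 - 3 * fps_X + 3 * fps_X ^ 2 - 2 * fps_const x * fps_X ^ 2 - fps_X ^ 3 + fps_const x * fps_X ^ 3"
  have den': "den = fps_const 1 + fps_const (-3) * fps_X + fps_const (3 - 2 * x) * fps_X ^ 2 + fps_const (x - 1) * fps_X ^ 3"
    unfolding den_def by (rule fps_ext) (simp add: numeral_fps_const)
  have num': "num = fps_X + fps_const (x - 2) * fps_X ^ 2 + fps_const (1 - x) * fps_X ^ 3"
    unfolding num_def by (rule fps_ext) (simp add: numeral_fps_const)
  have e: "A * den = A + fps_const (-3) * (fps_X * A) + fps_const (3 - 2 * x) * (fps_X ^ 2 * A) + fps_const (x - 1) * (fps_X ^ 3 * A)"
    unfolding den' by (simp add: algebra_simps)
  have An: "fps_nth A n = (if n = 0 then 0 else W x n)" for n unfolding A_def by (rule A_nth)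
  have key: "A * den = num"
  proof (rule fps_ext)
    fix n
    have c: "fps_nth (A * den) n = fps_nth A n + (-3) * (if n = 0 then 0 else fps_nth A (n - 1))
        + (3 - 2 * x) * (if n < 2 then 0 else fps_nth A (n - 2)) + (x - 1) * (if n < 3 then 0 else fps_nth A (n - 3))"
      unfolding e by (simp add: fps_X_power_mult_nth)
    have cn: "fps_nth num n = (if n = 1 then 1 else 0) + (x - 2) * (if n = 2 then 1 else 0) + (1 - x) * (if n = 3 then 1 else 0)"
      unfolding num' by simp
    have "n = 0 \<or> n = 1 \<or> n = 2 \<or> n = 3 \<or> (\<exists>k. n = k + 4)" by presburger
    thus "fps_nth (A * den) n = fps_nth num n"
    proof (elim disjE exE)
      assume "n = 0" thus ?thesis using c cn An by simp
    next
      assume "n = 1" thus ?thesis using c cn An W_init by simp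
    next
      assume "n = 2" thus ?thesis using c cn An W_init by (simp add: algebra_simps)
    next
      assume "n = 3" thus ?thesis using c cn An W_init by (simp add: algebra_simps)
    next
      fix k assume n: "n = k + 4"
      have "fps_nth (A * den) n = W x (k + 4) - 3 * W x (k + 3) + (3 - 2 * x) * W x (k + 2) + (x - 1) * W x (k + 1)"
        using c An n by (simp add: numeral_eq_Suc)
      also have "\<dots> = 0" using W_rec[of x k] by (simp add: algebra_simps)
      finally show ?thesis using cn n by simp
    qed
  qed
  have d0: "fps_nth den 0 \<noteq> 0" unfolding den' by simp
  have "num / den = num * inverse den" using fps_divide_unit[OF d0] .
  also have "\<dots> = A * (den * inverse den)" unfolding key[symmetric] by (simp add: mult.assoc)
  also have "den * inverse den = 1" using inverse_mult_eq_1'[OF d0] .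
  finally show ?thesis unfolding A_def num_def den_def by simp
qed

end
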